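(* Let $n\ge1$ and $\mathcal{N}=\mathbb{C}^{2^n}$. There is no subspace $\mathcal{M}\subseteq\mathcal{N}$ of dimension $2$ that separates $\mathcal{E}_{\mathrm{phase}}$ with at most $\alpha=\frac1{10}$ error.
   Context: $\mathcal{N}$ has standard basis $\{|x\rangle : x\in\{0,1\}^n\}$. For $S\subseteq\{0,1\}^n$ and $\theta\in[0,2\pi)$, $E_{S,\theta}$ is the linear operator with $E_{S,\theta}|x\rangle=e^{i\theta}|x\rangle$ if $x\in S$ and $E_{S,\theta}|x\rangle=|x\rangle$ otherwise. $\mathcal{E}_{\mathrm{phase}}=\{E_{S,\theta}: S\subseteq\{0,1\}^n,\ \theta\in\{0,\pi/4,\pi/2\}\}$. A subspace $\mathcal{M}$ separates a set $\mathcal{E}$ of operators with at most $\alpha$ error if for any $X,Y\in\mathcal{E}$ and any unit vectors $\phi_1,\phi_2\in\mathcal{M}$ with $\phi_1^*\phi_2=0$, $|\phi_1^*X^*Y\phi_2|\le\alpha$. *)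

theory Defs
  imports "HOL-Analysis.Analysis" "HOL-Library.Function_Algebras"
begin

text \<open>The space N = C^(2^n) with standard basis indexed by bit strings x in {0,1}^n,
  rendered as 'n \<Rightarrow> bool for a finite index type 'n with n = CARD('n) \<ge> 1.
  Vectors are functions from bit strings to complex numbers; operators are matrices.\<close>

type_synonym 'n qvec = "('n \<Rightarrow> bool) \<Rightarrow> complex"
type_synonym 'n qop = "('n \<Rightarrow> bool) \<Rightarrow> ('n \<Rightarrow> bool) \<Rightarrow> complex"

definition cscale :: "complex \<Rightarrow> 'n qvec \<Rightarrow> 'n qvec" where
  "cscale c v = (\<lambda>x. c * v x)"

definition apply_op :: "('n::finite) qop \<Rightarrow> 'n qvec \<Rightarrow> 'n qvec" where
  "apply_op A v = (\<lambda>x. \<Sum>y\<in>UNIV. A x y * v y)"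

definition adjoint_op :: "'n qop \<Rightarrow> 'n qop" where
  "adjoint_op A = (\<lambda>x y. cnj (A y x))"

definition cinner :: "('n::finite) qvec \<Rightarrow> 'n qvec \<Rightarrow> complex" where
  "cinner u v = (\<Sum>x\<in>UNIV. cnj (u x) * v x)"

definition unit_vec :: "('n::finite) qvec \<Rightarrow> bool" where
  "unit_vec v \<longleftrightarrow> sqrt (\<Sum>x\<in>UNIV. (cmod (v x))\<^sup>2) = 1"

definition E_op :: "('n \<Rightarrow> bool) set \<Rightarrow> real \<Rightarrow> 'n qop" where
  "E_op S \<theta> = (\<lambda>x y. if x = y then (if x \<in> S then exp (\<i> * complex_of_real \<theta>) else 1) else 0)"

definition E_phase :: "'n qop set" where
  "E_phase = {E_op S \<theta> | S \<theta>. \<theta> \<in> {0, pi/4, pi/2}}"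

definition separates :: "('n::finite) qvec set \<Rightarrow> 'n qop set \<Rightarrow> real \<Rightarrow> bool" where
  "separates M \<E> \<alpha> \<longleftrightarrow>
     (\<forall>X\<in>\<E>. \<forall>Y\<in>\<E>. \<forall>\<phi>1\<in>M. \<forall>\<phi>2\<in>M.
        unit_vec \<phi>1 \<longrightarrow> unit_vec \<phi>2 \<longrightarrow> cinner \<phi>1 \<phi>2 = 0 \<longrightarrow>
        cmod (cinner \<phi>1 (apply_op (adjoint_op X) (apply_op Y \<phi>2))) \<le> \<alpha>)"

end

theory Submission
  imports Defs
begin

interpretation cs: vector_space cscale
  by unfold_locales (auto simp: cscale_def fun_eq_iff algebra_simps)

definition nrm :: "('n::finite) qvec \<Rightarrow> real" where
  "nrm v = (\<Sum>x\<in>UNIV. (cmod (v x))\<^sup>2)"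

lemma cinner_add_left: "cinner (u + v) w = cinner u w + cinner v w"
  by (simp add: cinner_def sum.distrib algebra_simps)
lemma cinner_add_right: "cinner w (u + v) = cinner w u + cinner w v"
  by (simp add: cinner_def sum.distrib algebra_simps)
lemma cinner_scale_left: "cinner (cscale c u) w = cnj c * cinner u w"
  by (simp add: cinner_def cscale_def sum_distrib_left algebra_simps)
lemma cinner_scale_right: "cinner w (cscale c u) = c * cinner w u"
  by (simp add: cinner_def cscale_def sum_distrib_left algebra_simps)
lemma cinner_commute: "cinner v u = cnj (cinner u v)"
  by (simp add: cinner_def algebra_simps)
lemma cinner_self: "cinner v v = of_real (nrm v)"
proof -
  have "cinner v v = (\<Sum>x\<in>UNIV. of_real ((cmod (v x))\<^sup>2))"
    unfolding cinner_def by (intro sum.cong refl) (subst complex_norm_square, simp add: mult.commute)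
  also have "\<dots> = of_real (nrm v)" unfolding nrm_def of_real_sum ..
  finally show ?thesis .
qed
lemma unit_iff: "unit_vec v \<longleftrightarrow> cinner v v = 1"
  unfolding unit_vec_def cinner_self nrm_def by (auto simp del: of_real_sum)
lemma unit_nrm: "unit_vec v \<longleftrightarrow> nrm v = 1"
  unfolding unit_vec_def nrm_def by auto
lemma norm_pos: "(v::('n::finite) qvec) \<noteq> 0 \<Longrightarrow> nrm v > 0"
proof -
  assume "v \<noteq> 0"
  then obtain y where "v y \<noteq> 0" by (auto simp: fun_eq_iff)
  then have "0 < (cmod (v y))\<^sup>2" by simp
  also have "\<dots> \<le> (\<Sum>x\<in>UNIV. (cmod (v x))\<^sup>2)"
    by (rule member_le_sum) auto
  finally show ?thesis unfolding nrm_def .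
qed

lemma normalize:
  assumes "(v::('n::finite) qvec) \<noteq> 0"
  shows "unit_vec (cscale (of_real (1 / sqrt (nrm v))) v)"
proof -
  have s: "nrm v > 0" using norm_pos[OF assms] by simp
  have "cinner (cscale (of_real (1 / sqrt (nrm v))) v) (cscale (of_real (1 / sqrt (nrm v))) v)
      = of_real (1/ sqrt (nrm v) * (1/sqrt (nrm v)) * nrm v)"
  proof -
    have "\<And>c. cinner (cscale c v) (cscale c v) = cnj c * (c * cinner v v)"
      by (simp only: cinner_scale_left cinner_scale_right mult.left_commute)
    then show ?thesis by (subst (asm) cinner_self) (simp only: of_real_mult complex_cnj_complex_of_real mult.assoc)
  qed
  also have "\<dots> = 1"
  proof -
    have "sqrt (nrm v) * sqrt (nrm v) = nrm v" using s by simp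
    then have "1/ sqrt (nrm v) * (1/sqrt (nrm v)) * nrm v = 1" using s by (simp add: field_simps)
    then show ?thesis by simp
  qed
  finally show ?thesis unfolding unit_iff .
qed

lemma sum_parts:
  fixes f :: "'a::finite \<Rightarrow> complex"
  assumes "\<And>S. cmod (\<Sum>x\<in>S. f x) \<le> c"
  shows "(\<Sum>x\<in>UNIV. \<bar>Re (f x)\<bar>) \<le> 2*c" "(\<Sum>x\<in>UNIV. \<bar>Im (f x)\<bar>) \<le> 2*c"
proof -
  define P where "P = {x. Re (f x) \<ge> 0}"
  have "(\<Sum>x\<in>UNIV. \<bar>Re (f x)\<bar>) = (\<Sum>x\<in>P. \<bar>Re (f x)\<bar>) + (\<Sum>x\<in>-P. \<bar>Re (f x)\<bar>)"
    using sum.subset_diff[of P UNIV] by (simp add: Compl_eq_Diff_UNIV add.commute)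
  also have "(\<Sum>x\<in>P. \<bar>Re (f x)\<bar>) = Re (\<Sum>x\<in>P. f x)"
    by (simp add: Re_sum P_def)
  also have "(\<Sum>x\<in>-P. \<bar>Re (f x)\<bar>) = - Re (\<Sum>x\<in>-P. f x)"
    by (simp add: Re_sum P_def sum_negf[symmetric])
  finally have "(\<Sum>x\<in>UNIV. \<bar>Re (f x)\<bar>) \<le> cmod (\<Sum>x\<in>P. f x) + cmod (\<Sum>x\<in>-P. f x)"
    by (smt (verit) abs_Re_le_cmod)
  then show "(\<Sum>x\<in>UNIV. \<bar>Re (f x)\<bar>) \<le> 2*c" using assms[of P] assms[of "-P"] by linarith
  define Q where "Q = {x. Im (f x) \<ge> 0}"
  have "(\<Sum>x\<in>UNIV. \<bar>Im (f x)\<bar>) = (\<Sum>x\<in>Q. \<bar>Im (f x)\<bar>) + (\<Sum>x\<in>-Q. \<bar>Im (f x)\<bar>)"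
    using sum.subset_diff[of Q UNIV] by (simp add: Compl_eq_Diff_UNIV add.commute)
  also have "(\<Sum>x\<in>Q. \<bar>Im (f x)\<bar>) = Im (\<Sum>x\<in>Q. f x)"
    by (simp add: Im_sum Q_def)
  also have "(\<Sum>x\<in>-Q. \<bar>Im (f x)\<bar>) = - Im (\<Sum>x\<in>-Q. f x)"
    by (simp add: Im_sum Q_def sum_negf[symmetric])
  finally have "(\<Sum>x\<in>UNIV. \<bar>Im (f x)\<bar>) \<le> cmod (\<Sum>x\<in>Q. f x) + cmod (\<Sum>x\<in>-Q. f x)"
    by (smt (verit) abs_Im_le_cmod)
  then show "(\<Sum>x\<in>UNIV. \<bar>Im (f x)\<bar>) \<le> 2*c" using assms[of Q] assms[of "-Q"] by linarith
qed

lemma re_pt: "Re (cnj (p+q) * (p+ (-1)*q)) = (cmod p)^2 - (cmod q)^2"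
  unfolding cmod_power2 by (simp add: algebra_simps power2_eq_square)

lemma pt_ineq: "(cmod p)^2 + (cmod q)^2 \<le> \<bar>(cmod p)^2 - (cmod q)^2\<bar> + 2 * (\<bar>Re (cnj p * q)\<bar> + \<bar>Im (cnj p * q)\<bar>)"
proof -
  have "cmod p * cmod q \<le> \<bar>Re (cnj p * q)\<bar> + \<bar>Im (cnj p * q)\<bar>"
    using cmod_le[of "cnj p * q"] by (simp add: norm_mult)
  then have "2 * (cmod p * cmod q) \<le> 2 * (\<bar>Re (cnj p * q)\<bar> + \<bar>Im (cnj p * q)\<bar>)" by simp
  moreover have "(cmod p)^2 + (cmod q)^2 \<le> \<bar>(cmod p)^2 - (cmod q)^2\<bar> + 2 * (cmod p * cmod q)"
  proof (cases "cmod p \<ge> cmod q")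
    case True
    have "cmod q * cmod q \<le> cmod p * cmod q" using True by (simp add: mult_right_mono)
    then show ?thesis using True by (simp add: power2_eq_square)
  next
    case False
    have "cmod p * cmod p \<le> cmod p * cmod q" using False by (simp add: mult_left_mono)
    then show ?thesis using False by (simp add: power2_eq_square)
  qed
  ultimately show ?thesis by linarith
qed

lemma exp_half: "exp (\<i> * complex_of_real (pi/2)) = \<i>"
  using cis_conv_exp[of "pi/2"] cis_pi_half by simp

lemma exp_half2: "exp (\<i> * complex_of_real pi / 2) = \<i>"
  using exp_half by simp

lemma sep_key:
  fixes M :: "('n::finite) qvec set"
  assumes sep: "separates M E_phase (1/10)" and "p \<in> M" "q \<in> M" "unit_vec p" "unit_vec q"
    and orth: "cinner p q = 0"
  shows "cmod (\<Sum>x\<in>S. cnj (p x) * q x) \<le> 1/10"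
proof -
  have X: "E_op {} 0 \<in> (E_phase :: 'n qop set)" unfolding E_phase_def by blast
  have Y: "E_op S (pi/2) \<in> (E_phase :: 'n qop set)" unfolding E_phase_def by blast
  have b: "cmod (cinner p (apply_op (adjoint_op (E_op {} 0)) (apply_op (E_op S (pi/2)) q))) \<le> 1/10"
    using sep X Y assms unfolding separates_def by blast
  have ad: "apply_op (adjoint_op (E_op {} 0)) w = w" for w :: "'n qvec"
    by (rule ext) (simp add: apply_op_def adjoint_op_def E_op_def if_distrib[of cnj] if_distrib[of "\<lambda>a. a * _"] cong: if_cong)
  have ap: "apply_op (E_op S (pi/2)) q = (\<lambda>x. (1 + (if x \<in> S then \<i> - 1 else 0)) * q x)"
    by (rule ext) (simp add: apply_op_def E_op_def exp_half exp_half2 if_distrib[of "\<lambda>a. a * _"] cong: if_cong)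
  have "cinner p (\<lambda>x. (1 + (if x \<in> S then \<i> - 1 else 0)) * q x)
      = cinner p q + (\<Sum>x\<in>UNIV. if x \<in> S then (\<i> - 1) * (cnj (p x) * q x) else 0)"
    unfolding cinner_def sum.distrib[symmetric] by (rule sum.cong) (auto simp: algebra_simps)
  also have "\<dots> = (\<i> - 1) * (\<Sum>x\<in>S. cnj (p x) * q x)"
    by (simp add: orth sum.If_cases sum_distrib_left)
  finally have "cmod ((\<i> - 1) * (\<Sum>x\<in>S. cnj (p x) * q x)) \<le> 1/10"
    using b ad ap by simp
  then have "cmod (\<i> - 1) * cmod (\<Sum>x\<in>S. cnj (p x) * q x) \<le> 1/10"
    by (simp only: norm_mult)
  moreover have "cmod (\<i> - 1) = sqrt 2" by (simp add: cmod_def)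
  ultimately have A: "sqrt 2 * cmod (\<Sum>x\<in>S. cnj (p x) * q x) \<le> 1/10"
    by metis
  have "1 \<le> sqrt 2" by simp
  then have "1 * cmod (\<Sum>x\<in>S. cnj (p x) * q x) \<le> sqrt 2 * cmod (\<Sum>x\<in>S. cnj (p x) * q x)"
    by (rule mult_right_mono) simp
  then show ?thesis using A by linarith
qed

lemma re_scaled: "Re (cnj (complex_of_real r * (p+q)) * (complex_of_real r * (p + (-1)*q))) = r*r * ((cmod p)^2 - (cmod q)^2)"
proof -
  have "cnj (complex_of_real r * (p+q)) * (complex_of_real r * (p + (-1)*q)) = complex_of_real (r*r) * (cnj (p+q) * (p + (-1)*q))"
    by (simp add: algebra_simps)
  moreover have "Re (complex_of_real (r*r) * z) = r*r * Re z" for z by simp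
  ultimately show ?thesis by (simp only: re_pt)
qed

theorem theorem4:
  shows "\<not> (\<exists>M :: ('n::finite) qvec set.
            module.subspace cscale M \<and> vector_space.dim cscale M = 2 \<and>
            separates M E_phase (1/10))"
proof
  assume "\<exists>M :: ('n::finite) qvec set.
            module.subspace cscale M \<and> vector_space.dim cscale M = 2 \<and>
            separates M E_phase (1/10)"
  then obtain M :: "'n qvec set" where sub: "cs.subspace M" and dim: "cs.dim M = 2"
    and sep: "separates M E_phase (1/10)" by blast
  obtain B where B: "B \<subseteq> M" "cs.independent B" "card B = 2"
    using cs.basis_exists[of M] dim by metis
  then obtain a b where ab: "B = {a, b}" "a \<noteq> b" by (meson card_2_iff)
  have aM: "a \<in> M" and bM: "b \<in> M" using B ab by auto
  have b0: "b \<noteq> 0" using B(2) ab cs.dependent_zero by blast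
  have ansp: "a \<notin> cs.span {b}" using B(2) ab cs.independent_insert[of a "{b}"] by auto
  define \<phi>1 where "\<phi>1 = cscale (of_real (1 / sqrt (nrm b))) b"
  have u1: "unit_vec \<phi>1" unfolding \<phi>1_def by (rule normalize[OF b0])
  have m1: "\<phi>1 \<in> M" unfolding \<phi>1_def by (rule cs.subspace_scale[OF sub bM])
  define k where "k = cinner \<phi>1 a"
  define w where "w = a + cscale (- k) \<phi>1"
  have wM: "w \<in> M" unfolding w_def
    by (rule cs.subspace_add[OF sub aM cs.subspace_scale[OF sub m1]])
  have w0: "w \<noteq> 0"
  proof
    assume "w = 0"
    then have "a = cscale (k * of_real (1 / sqrt (nrm b))) b"
      by (auto simp: fun_eq_iff w_def \<phi>1_def cscale_def algebra_simps add_eq_0_iff2 eq_neg_iff_add_eq_0)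
    then have "a \<in> cs.span {b}" by (metis cs.span_base cs.span_scale insertI1)
    then show False using ansp by blast
  qed
  have o1: "cinner \<phi>1 w = 0"
    using u1 unfolding w_def k_def unit_iff by (simp only: cinner_add_right cinner_scale_right) simp
  define \<phi>2 where "\<phi>2 = cscale (of_real (1 / sqrt (nrm w))) w"
  have u2: "unit_vec \<phi>2" unfolding \<phi>2_def by (rule normalize[OF w0])
  have m2: "\<phi>2 \<in> M" unfolding \<phi>2_def by (rule cs.subspace_scale[OF sub wM])
  have o12: "cinner \<phi>1 \<phi>2 = 0" unfolding \<phi>2_def by (simp add: cinner_scale_right o1)
  have o21: "cinner \<phi>2 \<phi>1 = 0" using o12 cinner_commute[of \<phi>2 \<phi>1] by simp
  have p11: "cinner \<phi>1 \<phi>1 = 1" and p22: "cinner \<phi>2 \<phi>2 = 1" using u1 u2 unit_iff by auto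
  define c :: complex where "c = of_real (1 / sqrt 2)"
  have cc: "cnj c * c = 1/2" unfolding c_def by (simp flip: of_real_mult)
  define \<psi>1 where "\<psi>1 = cscale c (\<phi>1 + \<phi>2)"
  define \<psi>2 where "\<psi>2 = cscale c (\<phi>1 + cscale (-1) \<phi>2)"
  have n1: "\<psi>1 \<in> M" unfolding \<psi>1_def
    by (rule cs.subspace_scale[OF sub cs.subspace_add[OF sub m1 m2]])
  have n2: "\<psi>2 \<in> M" unfolding \<psi>2_def
    by (rule cs.subspace_scale[OF sub cs.subspace_add[OF sub m1 cs.subspace_scale[OF sub m2]]])
  have "cinner \<psi>1 \<psi>1 = cnj c * c * 2" unfolding \<psi>1_def
    by (simp add: cinner_add_left cinner_add_right cinner_scale_left cinner_scale_right p11 p22 o12 o21 mult.assoc)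
  then have v1: "unit_vec \<psi>1" using cc unfolding unit_iff by simp
  have "cinner \<psi>2 \<psi>2 = cnj c * c * 2" unfolding \<psi>2_def
    by (simp only: cinner_add_left cinner_add_right cinner_scale_left cinner_scale_right) (simp add: p11 p22 o12 o21 algebra_simps)
  then have v2: "unit_vec \<psi>2" using cc unfolding unit_iff by simp
  have v12: "cinner \<psi>1 \<psi>2 = 0" unfolding \<psi>1_def \<psi>2_def
    by (simp only: cinner_add_left cinner_add_right cinner_scale_left cinner_scale_right) (simp add: p11 p22 o12 o21)
  have h1: "\<And>S. cmod (\<Sum>x\<in>S. cnj (\<phi>1 x) * \<phi>2 x) \<le> 1/10"
    by (rule sep_key[OF sep m1 m2 u1 u2 o12])
  have h2: "\<And>S. cmod (\<Sum>x\<in>S. cnj (\<psi>1 x) * \<psi>2 x) \<le> 1/10"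
    by (rule sep_key[OF sep n1 n2 v1 v2 v12])
  have ra: "(\<Sum>x\<in>UNIV. \<bar>Re (cnj (\<phi>1 x) * \<phi>2 x)\<bar>) \<le> 2*(1/10)"
    and ia: "(\<Sum>x\<in>UNIV. \<bar>Im (cnj (\<phi>1 x) * \<phi>2 x)\<bar>) \<le> 2*(1/10)"
    using sum_parts[of "\<lambda>x. cnj (\<phi>1 x) * \<phi>2 x", OF h1] by auto
  have rg: "(\<Sum>x\<in>UNIV. \<bar>Re (cnj (\<psi>1 x) * \<psi>2 x)\<bar>) \<le> 2*(1/10)"
    using sum_parts(1)[of "\<lambda>x. cnj (\<psi>1 x) * \<psi>2 x", OF h2] by auto
  have pt: "Re (cnj (\<psi>1 x) * \<psi>2 x) = 1/2 * ((cmod (\<phi>1 x))^2 - (cmod (\<phi>2 x))^2)" for x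
  proof -
    have "Re (cnj (\<psi>1 x) * \<psi>2 x) = 1/sqrt 2 * (1/sqrt 2) * ((cmod (\<phi>1 x))^2 - (cmod (\<phi>2 x))^2)"
      unfolding \<psi>1_def \<psi>2_def c_def cscale_def plus_fun_apply by (rule re_scaled)
    then show ?thesis by simp
  qed
  have "(\<Sum>x\<in>UNIV. (cmod (\<phi>1 x))^2 + (cmod (\<phi>2 x))^2)
     \<le> (\<Sum>x\<in>UNIV. \<bar>(cmod (\<phi>1 x))^2 - (cmod (\<phi>2 x))^2\<bar> + 2 * (\<bar>Re (cnj (\<phi>1 x) * \<phi>2 x)\<bar> + \<bar>Im (cnj (\<phi>1 x) * \<phi>2 x)\<bar>))"
    by (rule sum_mono) (rule pt_ineq)
  also have "\<dots> = 2 * (\<Sum>x\<in>UNIV. \<bar>Re (cnj (\<psi>1 x) * \<psi>2 x)\<bar>) + 2 * ((\<Sum>x\<in>UNIV. \<bar>Re (cnj (\<phi>1 x) * \<phi>2 x)\<bar>) + (\<Sum>x\<in>UNIV. \<bar>Im (cnj (\<phi>1 x) * \<phi>2 x)\<bar>))"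
  proof -
    have split: "(\<Sum>x\<in>UNIV. A x + 2*(B' x + C x)) = (\<Sum>x\<in>UNIV. A x) + 2*((\<Sum>x\<in>UNIV. B' x)+(\<Sum>x\<in>UNIV. C x))"
      for A B' C :: "('n \<Rightarrow> bool) \<Rightarrow> real" by (simp add: sum.distrib sum_distrib_left)
    have sd: "(\<Sum>x\<in>UNIV. \<bar>(cmod (\<phi>1 x))^2 - (cmod (\<phi>2 x))^2\<bar>) = 2 * (\<Sum>x\<in>UNIV. \<bar>Re (cnj (\<psi>1 x) * \<psi>2 x)\<bar>)"
      unfolding pt by (simp add: sum_distrib_left abs_mult)
    show ?thesis by (simp only: split sd)
  qed
  finally have "(\<Sum>x\<in>UNIV. (cmod (\<phi>1 x))^2 + (cmod (\<phi>2 x))^2) \<le> 6/5"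
    using ra ia rg by argo
  moreover have "(\<Sum>x\<in>UNIV. (cmod (\<phi>1 x))^2 + (cmod (\<phi>2 x))^2) = 2"
    using u1 u2 unfolding unit_nrm nrm_def by (simp add: sum.distrib)
  ultimately show False by simp
qed

end
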